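(* There is no six-qubit stabilizer code encoding one qubit that has CSS structure and corrects an arbitrary single-qubit error. That is, there do not exist five independent, pairwise commuting operators $g_1,\dots,g_5$ in the six-qubit Pauli group, each of which is a tensor product of only $X$ and $I$ factors or only of $Z$ and $I$ factors (up to sign), such that the group $S=\langle g_1,\dots,g_5\rangle$ satisfies: for every pair $E_a,E_b\in\{I\}\cup\{X_i,Y_i,Z_i:i=1,\dots,6\}$, the operator $E_a^\dagger E_b$ either anticommutes with some element of $S$ or lies in $S$ up to phase.
   Context: $X,Y,Z$ are the single-qubit Pauli matrices and $P_i$ denotes the operator acting as $P$ on qubit $i$ and as identity elsewhere. Generators are independent if none is, up to phase, a product of the others. *)

theory Defs
  imports Main
begin

datatype pauli1 = PI | PX | PY | PZ

text \<open>Product of single-qubit Paulis: P Q = i^k R, returned as (k, R).\<close>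
fun mult1 :: "pauli1 \<Rightarrow> pauli1 \<Rightarrow> nat \<times> pauli1" where
  "mult1 PI q = (0, q)"
| "mult1 p PI = (0, p)"
| "mult1 PX PX = (0, PI)"
| "mult1 PY PY = (0, PI)"
| "mult1 PZ PZ = (0, PI)"
| "mult1 PX PY = (1, PZ)"
| "mult1 PY PX = (3, PZ)"
| "mult1 PY PZ = (1, PX)"
| "mult1 PZ PY = (3, PX)"
| "mult1 PZ PX = (1, PY)"
| "mult1 PX PZ = (3, PY)"

text \<open>An n-qubit Pauli operator i^k (P_0 \<otimes> ... \<otimes> P_{n-1}) is represented as the
  pair (k, P) with k < 4 (phase exponent of i) and P j = PI for all j \<ge> n.
  Qubits are indexed 0..n-1.\<close>
type_synonym pauli = "nat \<times> (nat \<Rightarrow> pauli1)"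

definition pauli_group :: "nat \<Rightarrow> pauli set" where
  "pauli_group n = {(k, P). k < 4 \<and> (\<forall>j\<ge>n. P j = PI)}"

definition pmult :: "nat \<Rightarrow> pauli \<Rightarrow> pauli \<Rightarrow> pauli" where
  "pmult n a b = ((fst a + fst b + (\<Sum>j<n. fst (mult1 (snd a j) (snd b j)))) mod 4,
                  (\<lambda>j. snd (mult1 (snd a j) (snd b j))))"

definition pid :: pauli where
  "pid = (0, (\<lambda>j. PI))"

text \<open>Hermitian adjoint: Pauli matrices are Hermitian, so only the phase is conjugated.\<close>
definition padj :: "pauli \<Rightarrow> pauli" where
  "padj a = ((4 - fst a) mod 4, snd a)"

definition commute :: "nat \<Rightarrow> pauli \<Rightarrow> pauli \<Rightarrow> bool" where
  "commute n a b \<longleftrightarrow> pmult n a b = pmult n b a"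

definition anticommute :: "nat \<Rightarrow> pauli \<Rightarrow> pauli \<Rightarrow> bool" where
  "anticommute n a b \<longleftrightarrow> pmult n a b = pmult n (2, \<lambda>j. PI) (pmult n b a)"

definition eq_phase :: "pauli \<Rightarrow> pauli \<Rightarrow> bool" where
  "eq_phase a b \<longleftrightarrow> snd a = snd b"

text \<open>Group generated by a set of Pauli operators (every Pauli operator has finite
  order, so the generated group is the set of finite products of generators).\<close>
inductive_set gen_group :: "nat \<Rightarrow> pauli set \<Rightarrow> pauli set" for n G where
  gen_id: "pid \<in> gen_group n G"
| gen_step: "g \<in> G \<Longrightarrow> s \<in> gen_group n G \<Longrightarrow> pmult n g s \<in> gen_group n G"

definition independent_gens :: "nat \<Rightarrow> ('i \<Rightarrow> pauli) \<Rightarrow> 'i set \<Rightarrow> bool" where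
  "independent_gens n g I \<longleftrightarrow>
     (\<forall>i\<in>I. \<not> (\<exists>s\<in>gen_group n (g ` (I - {i})). eq_phase s (g i)))"

definition css_type :: "nat \<Rightarrow> pauli \<Rightarrow> bool" where
  "css_type n a \<longleftrightarrow> fst a \<in> {0, 2} \<and>
     ((\<forall>j<n. snd a j \<in> {PI, PX}) \<or> (\<forall>j<n. snd a j \<in> {PI, PZ}))"

definition single :: "nat \<Rightarrow> pauli1 \<Rightarrow> pauli" where
  "single i P = (0, (\<lambda>j. if j = i then P else PI))"

definition errors :: "nat \<Rightarrow> pauli set" where
  "errors n = {pid} \<union> {single i P | i P. i < n \<and> P \<in> {PX, PY, PZ}}"

end

theory Submission
  imports Defs
begin


definition SumI :: "(nat \<Rightarrow> nat set) \<Rightarrow> nat set \<Rightarrow> nat set" where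
  "SumI f A = {x. odd (card {i\<in>A. x \<in> f i})}"

lemma SumI_empty[simp]: "SumI f {} = {}"
  by (simp add: SumI_def)

lemma SumI_insert:
  assumes "finite A" "a \<notin> A"
  shows "SumI f (insert a A) = sym_diff (f a) (SumI f A)"
proof -
  have "\<And>x. card {i\<in>insert a A. x \<in> f i} = (if x \<in> f a then Suc (card {i\<in>A. x \<in> f i}) else card {i\<in>A. x \<in> f i})"
  proof -
    fix x
    show "card {i\<in>insert a A. x \<in> f i} = (if x \<in> f a then Suc (card {i\<in>A. x \<in> f i}) else card {i\<in>A. x \<in> f i})"
    proof (cases "x \<in> f a")
      case True
      then have "{i\<in>insert a A. x \<in> f i} = insert a {i\<in>A. x \<in> f i}" by auto
      then show ?thesis using True assms by simp
    next
      case False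
      then have "{i\<in>insert a A. x \<in> f i} = {i\<in>A. x \<in> f i}" by auto
      then show ?thesis using False by simp
    qed
  qed
  then show ?thesis by (auto simp: SumI_def)
qed

lemma SumI_sd:
  assumes "finite A" "finite B"
  shows "sym_diff (SumI f A) (SumI f B) = SumI f (sym_diff A B)"
  using assms(1)
proof (induction A rule: finite_induct)
  case empty
  then show ?case by simp
next
  case (insert a A)
  have fin: "finite (sym_diff A B)" using insert assms by auto
  show ?case
  proof (cases "a \<in> B")
    case True
    have e: "sym_diff (insert a A) B = sym_diff A B - {a}" using True insert by auto
    have "a \<in> sym_diff A B" using True insert by auto
    then have "sym_diff A B = insert a (sym_diff A B - {a})" by auto
    then have "SumI f (sym_diff A B) = sym_diff (f a) (SumI f (sym_diff A B - {a}))"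
      using SumI_insert[of "sym_diff A B - {a}" a f] fin by (metis Diff_iff finite_Diff insertI1)
    then show ?thesis using insert SumI_insert[of A a f] e by auto
  next
    case False
    have e: "sym_diff (insert a A) B = insert a (sym_diff A B)" using False insert by auto
    have "a \<notin> sym_diff A B" using False insert by auto
    then show ?thesis using insert SumI_insert[of A a f] SumI_insert[of "sym_diff A B" a f] fin e by auto
  qed
qed

lemma card_sd: assumes "finite X" "finite Y"
  shows "card (sym_diff X Y) + 2 * card (X \<inter> Y) = card X + card Y"
proof -
  have "card (sym_diff X Y) = card (X - Y) + card (Y - X)"
    by (rule card_Un_disjoint) (use assms in auto)
  moreover have "card X = card (X - Y) + card (X \<inter> Y)"
    using assms by (metis Int_Diff_Un Int_Diff_disjoint card_Un_disjoint finite_Diff finite_Int Un_commute inf_commute)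
  moreover have "card Y = card (Y - X) + card (X \<inter> Y)"
    using assms by (metis Int_Diff_Un Int_Diff_disjoint card_Un_disjoint finite_Diff finite_Int Un_commute inf_commute)
  ultimately show ?thesis by simp
qed

lemma even_sd:
  assumes "finite X" "finite Y"
  shows "even (card (sym_diff X Y \<inter> K)) \<longleftrightarrow> (even (card (X \<inter> K)) \<longleftrightarrow> even (card (Y \<inter> K)))"
proof -
  have e: "sym_diff X Y \<inter> K = sym_diff (X \<inter> K) (Y \<inter> K)" by auto
  have "card (sym_diff (X \<inter> K) (Y \<inter> K)) + 2 * card ((X \<inter> K) \<inter> (Y \<inter> K)) = card (X \<inter> K) + card (Y \<inter> K)"
    using card_sd assms by auto
  then show ?thesis unfolding e by presburger
qed


lemma sd_cancel: "sym_diff (v::'a set) X = sym_diff v Y \<Longrightarrow> X = Y"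
  by (simp add: set_eq_iff) (metis DiffD2 Diff_iff UnCI UnE)
lemma sd_solve: "(A::'a set) = sym_diff v B \<Longrightarrow> v = sym_diff A B"
  by (auto simp add: set_eq_iff)

lemma SumI_in:
  assumes "finite A" "\<forall>i\<in>A. f i \<in> V" "{} \<in> V" "\<forall>a\<in>V. \<forall>b\<in>V. sym_diff a b \<in> V"
  shows "SumI f A \<in> V"
  using assms by (induction A rule: finite_induct) (auto simp: SumI_insert)

lemma SumI_fin:
  assumes "finite A" "\<forall>i\<in>A. finite (f i)"
  shows "finite (SumI f A)"
proof -
  have "SumI f A \<subseteq> \<Union> (f ` A)"
  proof
    fix x assume "x \<in> SumI f A"
    then have "{i\<in>A. x \<in> f i} \<noteq> {}" unfolding SumI_def by (metis (no_types, lifting) card.empty even_zero mem_Collect_eq)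
    then obtain i where "i \<in> A" "x \<in> f i" by blast
    then show "x \<in> \<Union> (f ` A)" by blast
  qed
  then show ?thesis using assms by (meson finite_UN_I finite_subset)
qed

lemma SumI_even:
  assumes "finite A" "\<forall>i\<in>A. finite (f i)" "\<forall>i\<in>A. even (card (f i \<inter> K))"
  shows "even (card (SumI f A \<inter> K))"
  using assms
proof (induction A rule: finite_induct)
  case empty then show ?case by simp
next
  case (insert a A)
  have "finite (SumI f A)" using SumI_fin insert by auto
  then show ?case using insert SumI_insert[of A a f] even_sd[of "f a" "SumI f A" K] by auto
qed

lemma tri_inj:
  assumes "\<forall>i\<in>T. i \<in> f i" "\<forall>i\<in>T. \<forall>i'\<in>T. i \<noteq> i' \<longrightarrow> i \<notin> f i'"
  shows "inj_on (SumI f) (Pow T)"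
proof (rule inj_onI)
  fix A B assume A: "A \<in> Pow T" and B: "B \<in> Pow T" and eq: "SumI f A = SumI f B"
  have key: "\<And>C i. C \<subseteq> T \<Longrightarrow> i \<in> T \<Longrightarrow> (i \<in> SumI f C \<longleftrightarrow> i \<in> C)"
  proof -
    fix C i assume C: "C \<subseteq> T" and i: "i \<in> T"
    have "{i'\<in>C. i \<in> f i'} = (if i \<in> C then {i} else {})" using C i assms by (auto; metis subsetD)
    then show "i \<in> SumI f C \<longleftrightarrow> i \<in> C" by (auto simp: SumI_def)
  qed
  show "A = B"
  proof
    show "A \<subseteq> B" using key[of A] key[of B] A B eq by auto
    show "B \<subseteq> A" using key[of A] key[of B] A B eq by auto
  qed
qed


lemma core:
  fixes V :: "nat set set" and x1 x2 :: "nat set"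
  assumes VI: "V \<subseteq> Pow {0..<6}"
  and V0: "{} \<in> V" and Vc: "\<forall>a\<in>V. \<forall>b\<in>V. sym_diff a b \<in> V"
  and x1I: "x1 \<subseteq> {0..<6}" and x2I: "x2 \<subseteq> {0..<6}"
  and DZ: "\<forall>e. e \<subseteq> {0..<6} \<longrightarrow> 1 \<le> card e \<longrightarrow> card e \<le> 2 \<longrightarrow> even (card (e \<inter> x1)) \<longrightarrow> even (card (e \<inter> x2)) \<longrightarrow> e \<in> V"
  and DX: "\<forall>e. e \<subseteq> {0..<6} \<longrightarrow> 1 \<le> card e \<longrightarrow> card e \<le> 2 \<longrightarrow> (\<forall>v\<in>V. even (card (e \<inter> v))) \<longrightarrow> e \<in> {{}, x1, x2, sym_diff x1 x2}"
  shows "16 \<le> card V \<and> (x2 = {} \<longrightarrow> 32 \<le> card V) \<and> (x1 = {} \<longrightarrow> x2 = {} \<longrightarrow> 64 \<le> card V)"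
proof -
  define I where "I = {0..<6::nat}"
  define cls where "cls i = {j\<in>I. (j\<in>x1 \<longleftrightarrow> i\<in>x1) \<and> (j\<in>x2 \<longleftrightarrow> i\<in>x2)}" for i
  define m where "m i = Min (cls i)" for i
  define f where "f i = (if i \<in> x1 \<union> x2 then {m i, i} else {i})" for i
  define R where "R = m ` (I \<inter> (x1 \<union> x2))"
  define T where "T = I - R"
  define K1 where "K1 = {j\<in>I. j\<in>x1 \<and> j\<notin>x2}"
  define K2 where "K2 = {j\<in>I. j\<notin>x1 \<and> j\<in>x2}"
  define K3 where "K3 = {j\<in>I. j\<in>x1 \<and> j\<in>x2}"
  have finV: "finite V" using VI finite_subset by (metis finite_Pow_iff finite_atLeastLessThan)
  have cls_fin: "finite (cls i)" for i unfolding cls_def I_def by auto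
  have m_in: "i \<in> I \<Longrightarrow> m i \<in> cls i" for i
    unfolding m_def by (rule Min_in[OF cls_fin]) (auto simp: cls_def)
  have mI: "i \<in> I \<Longrightarrow> m i \<in> I" for i using m_in unfolding cls_def by auto
  have RI: "R \<subseteq> I" unfolding R_def using mI by auto
  have cardT: "card T = 6 - card R" unfolding T_def I_def using RI I_def
    by (simp add: card_Diff_subset finite_subset)
  have finT: "finite T" unfolding T_def I_def by auto
  have fin_f: "finite (f i)" for i unfolding f_def by auto
  have fV: "f i \<in> V" if iT: "i \<in> T" for i
  proof (cases "i \<in> x1 \<union> x2")
    case True
    have iI: "i \<in> I" using iT T_def by auto
    have "m i \<in> R" using True iI unfolding R_def by auto
    then have ne: "m i \<noteq> i" using iT unfolding T_def by auto
    have mc: "m i \<in> cls i" using m_in iI by auto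
    have fi: "f i = {m i, i}" using True f_def by auto
    have "even (card ({m i, i} \<inter> x1))"
    proof (cases "i \<in> x1")
      case True then have "{m i, i} \<inter> x1 = {m i, i}" using mc cls_def by auto
      then show ?thesis using ne by simp
    next
      case False then have "{m i, i} \<inter> x1 = {}" using mc cls_def by auto
      then show ?thesis by simp
    qed
    moreover have "even (card ({m i, i} \<inter> x2))"
    proof (cases "i \<in> x2")
      case True then have "{m i, i} \<inter> x2 = {m i, i}" using mc cls_def by auto
      then show ?thesis using ne by simp
    next
      case False then have "{m i, i} \<inter> x2 = {}" using mc cls_def by auto
      then show ?thesis by simp
    qed
    moreover have "{m i, i} \<subseteq> {0..<6}" using mI iI I_def by auto
    ultimately show ?thesis using DZ ne fi by auto
  next
    case False
    then have "f i = {i}" "{i} \<inter> x1 = {}" "{i} \<inter> x2 = {}" using f_def by auto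
    moreover have "{i} \<subseteq> {0..<6}" using iT T_def I_def by auto
    ultimately show ?thesis using DZ by auto
  qed
  have tri1: "\<forall>i\<in>T. i \<in> f i" unfolding f_def by auto
  have tri2: "\<forall>i\<in>T. \<forall>i'\<in>T. i \<noteq> i' \<longrightarrow> i \<notin> f i'"
  proof (intro ballI impI)
    fix i i' assume i: "i \<in> T" and i': "i' \<in> T" and ne: "i \<noteq> i'"
    show "i \<notin> f i'"
    proof (cases "i' \<in> x1 \<union> x2")
      case True
      then have "m i' \<in> R" using i' T_def R_def by auto
      then have "i \<noteq> m i'" using i T_def by auto
      then show ?thesis using True ne f_def by auto
    next
      case False then show ?thesis using ne f_def by auto
    qed
  qed
  have injS: "inj_on (SumI f) (Pow T)" by (rule tri_inj[OF tri1 tri2])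
  have SV: "SumI f ` Pow T \<subseteq> V"
  proof
    fix y assume "y \<in> SumI f ` Pow T"
    then obtain A where A: "A \<subseteq> T" "y = SumI f A" by auto
    have "finite A" using A finT finite_subset by auto
    then show "y \<in> V" using SumI_in[of A f V] A fV V0 Vc by auto
  qed
  have cardS: "card (SumI f ` Pow T) = 2 ^ card T"
    using card_image[OF injS] finT by (simp add: card_Pow)
  have bound: "2 ^ card T \<le> card V" using card_mono[OF finV SV] cardS by simp
  have clsK: "i \<in> I \<Longrightarrow> i \<in> x1 \<union> x2 \<Longrightarrow> cls i \<in> {K1, K2, K3}" for i
    unfolding cls_def K1_def K2_def K3_def by auto
  have Rsub: "R \<subseteq> Min ` ({K1,K2,K3} - {{}})"
  proof
    fix r assume "r \<in> R"
    then obtain i where i: "i \<in> I" "i \<in> x1 \<union> x2" "r = m i" unfolding R_def by auto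
    have "cls i \<noteq> {}" using m_in[OF i(1)] by auto
    then show "r \<in> Min ` ({K1,K2,K3} - {{}})" using clsK[OF i(1,2)] i(3) m_def by auto
  qed
  have cardR: "card R \<le> card ({K1,K2,K3} - {{}})"
    using card_mono[OF _ Rsub] card_image_le[of "{K1,K2,K3} - {{}}" Min] by (meson finite.emptyI finite_Diff finite_imageI finite_insert le_trans)
  have R3: "card R \<le> 3"
  proof -
    have "card ({K1,K2,K3} - {{}}) \<le> card {K1,K2,K3}" by (rule card_mono) auto
    also have "\<dots> \<le> 3" by (simp add: card_insert_le_m1)
    finally show ?thesis using cardR by simp
  qed
  have part1: "16 \<le> card V"
  proof (cases "card R \<le> 2")
    case True
    then have "card T \<ge> 4" using cardT by simp
    then have "(2::nat)^4 \<le> 2 ^ card T" by (rule power_increasing) simp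
    then show ?thesis using bound by simp
  next
    case False
    then have R3': "card R = 3" using R3 by simp
    then have cT: "card T = 3" using cardT by simp
    have ne: "K1 \<noteq> {}" "K2 \<noteq> {}" "K3 \<noteq> {}"
    proof -
      have c: "card ({K1,K2,K3} - {{}}) \<ge> 3" using cardR R3' by simp
      show "K1 \<noteq> {}"
      proof
        assume "K1 = {}"
        then have "{K1,K2,K3} - {{}} \<subseteq> {K2,K3}" by auto
        then have "card ({K1,K2,K3} - {{}}) \<le> card {K2,K3}" by (rule card_mono[rotated]) auto
        also have "\<dots> \<le> 2" by (simp add: card_insert_le_m1)
        finally show False using c by simp
      qed
      show "K2 \<noteq> {}"
      proof
        assume "K2 = {}"
        then have "{K1,K2,K3} - {{}} \<subseteq> {K1,K3}" by auto
        then have "card ({K1,K2,K3} - {{}}) \<le> card {K1,K3}" by (rule card_mono[rotated]) auto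
        also have "\<dots> \<le> 2" by (simp add: card_insert_le_m1)
        finally show False using c by simp
      qed
      show "K3 \<noteq> {}"
      proof
        assume "K3 = {}"
        then have "{K1,K2,K3} - {{}} \<subseteq> {K1,K2}" by auto
        then have "card ({K1,K2,K3} - {{}}) \<le> card {K1,K2}" by (rule card_mono[rotated]) auto
        also have "\<dots> \<le> 2" by (simp add: card_insert_le_m1)
        finally show False using c by simp
      qed
    qed
    have sum6: "card K1 + card K2 + card K3 \<le> 6"
    proof -
      have "card (K1 \<union> K2 \<union> K3) = card K1 + card K2 + card K3"
      proof -
        have f: "finite K1" "finite K2" "finite K3" unfolding K1_def K2_def K3_def I_def by auto
        have d: "K1 \<inter> K2 = {}" "(K1 \<union> K2) \<inter> K3 = {}" unfolding K1_def K2_def K3_def by auto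
        have "card (K1 \<union> K2 \<union> K3) = card (K1 \<union> K2) + card K3"
          using card_Un_disjoint[of "K1 \<union> K2" K3] f d by auto
        moreover have "card (K1 \<union> K2) = card K1 + card K2" using card_Un_disjoint[of K1 K2] f d by auto
        ultimately show ?thesis by simp
      qed
      moreover have "card (K1 \<union> K2 \<union> K3) \<le> card I"
        by (rule card_mono) (auto simp: I_def K1_def K2_def K3_def)
      ultimately show ?thesis by (simp add: I_def)
    qed
    obtain K where K: "K \<in> {K1,K2,K3}" "card K \<le> 2"
    proof (cases "card K1 \<le> 2")
      case True then show ?thesis using that by blast
    next
      case F1: False
      show ?thesis
      proof (cases "card K2 \<le> 2")
        case True then show ?thesis using that by blast
      next
        case False
        then have "card K3 \<le> 2" using F1 sum6 by linarith
        then show ?thesis using that by blast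
      qed
    qed
    obtain a1 where a1: "a1 \<in> K1" using ne by auto
    obtain a2 where a2: "a2 \<in> K2" using ne by auto
    obtain a3 where a3: "a3 \<in> K3" using ne by auto
    have m1: "a1 \<in> x1" "a1 \<notin> x2" "a2 \<notin> x1" "a2 \<in> x2" "a3 \<in> x1" "a3 \<in> x2"
      using a1 a2 a3 unfolding K1_def K2_def K3_def by auto
    have m2: "a1 \<notin> K2" "a1 \<notin> K3" "a2 \<notin> K1" "a2 \<notin> K3" "a3 \<notin> K1" "a3 \<notin> K2"
      using m1 unfolding K1_def K2_def K3_def by auto
    from K(1) consider "K = K1" | "K = K2" | "K = K3" by blast
    note Kc = this
    have Kn: "K \<notin> {{}, x1, x2, sym_diff x1 x2}"
    proof (cases rule: Kc)
      case 1
      have "a3 \<in> x1" "a3 \<notin> K" "a1 \<in> K" "a1 \<notin> x2" "a2 \<notin> K" "a2 \<in> sym_diff x1 x2"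
        using 1 m1 m2 a1 by auto
      then show ?thesis by blast
    next
      case 2
      have "a1 \<in> x1" "a1 \<notin> K" "a3 \<in> x2" "a3 \<notin> K" "a1 \<in> sym_diff x1 x2" "a2 \<in> K"
        using 2 m1 m2 a2 by auto
      then show ?thesis by blast
    next
      case 3
      have "a1 \<in> x1" "a1 \<notin> K" "a2 \<in> x2" "a2 \<notin> K" "a3 \<notin> sym_diff x1 x2" "a3 \<in> K"
        using 3 m1 m2 a3 by auto
      then show ?thesis by blast
    qed
    have KI: "K \<subseteq> {0..<6}" using Kc unfolding K1_def K2_def K3_def I_def by cases auto
    have Kne: "K \<noteq> {}" using Kn by blast
    have K1c: "1 \<le> card K" using Kne KI by (simp add: Suc_le_eq card_gt_0_iff finite_subset)
    have "\<not> (\<forall>v\<in>V. even (card (K \<inter> v)))"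
    proof
      assume "\<forall>v\<in>V. even (card (K \<inter> v))"
      then have "K \<in> {{}, x1, x2, sym_diff x1 x2}" using DX KI K1c K(2) by simp
      then show False using Kn by blast
    qed
    then obtain v where v: "v \<in> V" "odd (card (K \<inter> v))" by blast
    have Kmem: "\<And>j j'. j \<in> I \<Longrightarrow> j' \<in> I \<Longrightarrow> (j \<in> x1 \<longleftrightarrow> j' \<in> x1) \<Longrightarrow> (j \<in> x2 \<longleftrightarrow> j' \<in> x2) \<Longrightarrow> (j \<in> K \<longleftrightarrow> j' \<in> K)"
      using Kc unfolding K1_def K2_def K3_def by cases auto
    have Kx: "K \<subseteq> x1 \<union> x2" using Kc unfolding K1_def K2_def K3_def by cases auto
    have fK: "even (card (f i \<inter> K))" if i: "i \<in> T" for i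
    proof (cases "i \<in> x1 \<union> x2")
      case True
      have iI: "i \<in> I" using i T_def by auto
      have "m i \<in> R" using True iI unfolding R_def by auto
      then have ne: "m i \<noteq> i" using i unfolding T_def by auto
      have mc: "m i \<in> cls i" using m_in iI by auto
      then have mp: "m i \<in> I" "m i \<in> x1 \<longleftrightarrow> i \<in> x1" "m i \<in> x2 \<longleftrightarrow> i \<in> x2" unfolding cls_def by auto
      have eq: "m i \<in> K \<longleftrightarrow> i \<in> K" using Kmem[OF mp(1) iI mp(2) mp(3)] .
      have fi: "f i = {m i, i}" using True f_def by simp
      show ?thesis
      proof (cases "i \<in> K")
        case True
        then have "f i \<inter> K = {m i, i}" using eq fi by auto
        then show ?thesis using ne by simp
      next
        case False
        then have "f i \<inter> K = {}" using eq fi by auto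
        then show ?thesis by simp
      qed
    next
      case False
      then have "f i \<inter> K = {}" using Kx f_def by auto
      then show ?thesis by simp
    qed
    have evS: "even (card (SumI f A \<inter> K))" if "A \<subseteq> T" for A
      by (rule SumI_even) (use that fK fin_f finT finite_subset in auto)
    define S2 where "S2 = (\<lambda>A. sym_diff v (SumI f A)) ` Pow T"
    have S2V: "S2 \<subseteq> V"
    proof
      fix y assume "y \<in> S2"
      then obtain A where A: "A \<in> Pow T" "y = sym_diff v (SumI f A)" unfolding S2_def by blast
      then have "SumI f A \<in> V" using SV by blast
      then show "y \<in> V" using A v(1) Vc by blast
    qed
    have inj2: "inj_on (\<lambda>A. sym_diff v (SumI f A)) (Pow T)"
    proof (rule inj_onI)
      fix A B assume "A \<in> Pow T" "B \<in> Pow T" "sym_diff v (SumI f A) = sym_diff v (SumI f B)"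
      then have "SumI f A = SumI f B" using sd_cancel by metis
      then show "A = B" using injS \<open>A \<in> Pow T\<close> \<open>B \<in> Pow T\<close> inj_on_eq_iff by metis
    qed
    have cS2: "card S2 = 8" unfolding S2_def using card_image[OF inj2] finT cT by (simp add: card_Pow)
    have disj: "SumI f ` Pow T \<inter> S2 = {}"
    proof (rule ccontr)
      assume "SumI f ` Pow T \<inter> S2 \<noteq> {}"
      then obtain y where y1: "y \<in> SumI f ` Pow T" and y2: "y \<in> S2" by blast
      obtain A where A: "A \<subseteq> T" "y = SumI f A" using y1 by blast
      obtain B where B: "B \<subseteq> T" "y = sym_diff v (SumI f B)" using y2 unfolding S2_def by blast
      have eq: "SumI f A = sym_diff v (SumI f B)" using A B by simp
      have fA: "finite A" "finite B" using A B finT finite_subset by auto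
      have "v = sym_diff (SumI f A) (SumI f B)" using eq by (rule sd_solve)
      also have "\<dots> = SumI f (sym_diff A B)" using SumI_sd fA by blast
      finally have veq: "v = SumI f (sym_diff A B)" .
      have "even (card (SumI f (sym_diff A B) \<inter> K))" using evS[of "sym_diff A B"] A B by blast
      then have "even (card (v \<inter> K))" using veq by simp
      then show False using v by (simp add: Int_commute)
    qed
    have fin1: "finite (SumI f ` Pow T)" using finT by simp
    have fin2: "finite S2" unfolding S2_def using finT by simp
    have "card (SumI f ` Pow T \<union> S2) = card (SumI f ` Pow T) + card S2"
      by (rule card_Un_disjoint[OF fin1 fin2 disj])
    then have c16: "card (SumI f ` Pow T \<union> S2) = 16" using cardS cT cS2 by simp
    have "SumI f ` Pow T \<union> S2 \<subseteq> V" using SV S2V by blast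
    then have "card (SumI f ` Pow T \<union> S2) \<le> card V" by (rule card_mono[OF finV])
    then show ?thesis using c16 by simp
  qed
  have part2: "x2 = {} \<longrightarrow> 32 \<le> card V"
  proof
    assume x2: "x2 = {}"
    have "{K1,K2,K3} - {{}} \<subseteq> {K1}" unfolding K2_def K3_def using x2 by auto
    then have "card ({K1,K2,K3} - {{}}) \<le> 1" using card_mono[of "{K1}"] by fastforce
    then have "card T \<ge> 5" using cardR cardT by simp
    then have "(2::nat)^5 \<le> 2 ^ card T" by (rule power_increasing) simp
    then show "32 \<le> card V" using bound by simp
  qed
  have part3: "x1 = {} \<longrightarrow> x2 = {} \<longrightarrow> 64 \<le> card V"
  proof (intro impI)
    assume x: "x1 = {}" "x2 = {}"
    have "R = {}" unfolding R_def using x by auto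
    then have "card T = 6" using cardT by simp
    then show "64 \<le> card V" using bound by simp
  qed
  show ?thesis using part1 part2 part3 by blast
qed



definition xset :: "(nat \<Rightarrow> pauli1) \<Rightarrow> nat set" where
  "xset p = {j. j < 6 \<and> p j \<in> {PX, PY}}"
definition zset :: "(nat \<Rightarrow> pauli1) \<Rightarrow> nat set" where
  "zset p = {j. j < 6 \<and> p j \<in> {PY, PZ}}"
definition lac :: "pauli1 \<Rightarrow> pauli1 \<Rightarrow> bool" where
  "lac p q \<longleftrightarrow> p \<noteq> PI \<and> q \<noteq> PI \<and> p \<noteq> q"

lemma mult1_x: "(snd (mult1 p q) \<in> {PX, PY}) \<longleftrightarrow> \<not> ((p \<in> {PX, PY}) \<longleftrightarrow> (q \<in> {PX, PY}))"
  by (cases p; cases q) auto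
lemma mult1_z: "(snd (mult1 p q) \<in> {PY, PZ}) \<longleftrightarrow> \<not> ((p \<in> {PY, PZ}) \<longleftrightarrow> (q \<in> {PY, PZ}))"
  by (cases p; cases q) auto

lemma xset_mult: "xset (snd (pmult n a b)) = sym_diff (xset (snd a)) (xset (snd b))"
  unfolding xset_def pmult_def using mult1_x by auto
lemma zset_mult: "zset (snd (pmult n a b)) = sym_diff (zset (snd a)) (zset (snd b))"
  unfolding zset_def pmult_def using mult1_z by auto

lemma ph_cong: "(4::int) dvd (int (fst (mult1 p q)) - int (fst (mult1 q p)) - (if lac p q then 2 else 0))"
  by (cases p; cases q) (simp_all add: lac_def)

lemma sum_cong: "(4::int) dvd ((\<Sum>j<(n::nat). int (fst (mult1 (a j) (b j))) - int (fst (mult1 (b j) (a j)))) - 2 * int (card {j. j < n \<and> lac (a j) (b j)}))"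
proof (induction n)
  case 0 then show ?case by simp
next
  case (Suc n)
  have c: "card {j. j < Suc n \<and> lac (a j) (b j)} = card {j. j < n \<and> lac (a j) (b j)} + (if lac (a n) (b n) then 1 else 0)"
  proof (cases "lac (a n) (b n)")
    case True
    then have "{j. j < Suc n \<and> lac (a j) (b j)} = insert n {j. j < n \<and> lac (a j) (b j)}" by (auto simp: less_Suc_eq)
    then show ?thesis using True by simp
  next
    case False
    then have "{j. j < Suc n \<and> lac (a j) (b j)} = {j. j < n \<and> lac (a j) (b j)}" by (auto simp: less_Suc_eq)
    then show ?thesis using False by simp
  qed
  have "(4::int) dvd (((\<Sum>j<n. int (fst (mult1 (a j) (b j))) - int (fst (mult1 (b j) (a j)))) - 2 * int (card {j. j < n \<and> lac (a j) (b j)}))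
     + (int (fst (mult1 (a n) (b n))) - int (fst (mult1 (b n) (a n))) - (if lac (a n) (b n) then 2 else 0)))"
    using Suc ph_cong by (rule dvd_add)
  then show ?case using c by (simp add: algebra_simps split: if_splits)
qed

lemma anti_odd:
  assumes "anticommute n a b"
  shows "odd (card {j. j < n \<and> lac (snd a j) (snd b j)})"
proof -
  define X where "X = (\<Sum>j<n. fst (mult1 (snd a j) (snd b j)))"
  define Y where "Y = (\<Sum>j<n. fst (mult1 (snd b j) (snd a j)))"
  define c where "c = card {j. j < n \<and> lac (snd a j) (snd b j)}"
  have "(fst a + fst b + X) mod 4 = (2 + (fst b + fst a + Y) mod 4) mod 4"
    using assms unfolding anticommute_def pmult_def X_def Y_def by simp
  moreover have "(2 + (fst b + fst a + Y) mod 4) mod 4 = (2 + (fst b + fst a + Y)) mod 4"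
    by (rule mod_add_right_eq)
  ultimately have "(fst a + fst b + X) mod 4 = (2 + fst b + fst a + Y) mod 4"
    by (simp only: add.assoc)
  then have "int (fst a + fst b + X) mod 4 = int (2 + fst b + fst a + Y) mod 4"
    by (metis of_nat_mod of_nat_numeral)
  then have h1: "(4::int) dvd (int X - int Y - 2)"
    by (simp add: mod_eq_dvd_iff algebra_simps)
  have h2: "(4::int) dvd (int X - int Y - 2 * int c)"
    using sum_cong[where n=n and a="snd a" and b="snd b"] unfolding X_def Y_def c_def by (simp add: sum_subtractf)
  have "(4::int) dvd (2 * int c - 2)" using dvd_diff[OF h1 h2] by (simp add: algebra_simps)
  then show ?thesis unfolding c_def[symmetric] by presburger
qed


lemma lacX: "lac PX q \<longleftrightarrow> q \<in> {PY, PZ}" by (cases q) (auto simp: lac_def)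
lemma lacZ: "lac PZ q \<longleftrightarrow> q \<in> {PX, PY}" by (cases q) (auto simp: lac_def)
lemma lacI: "\<not> lac PI q" by (simp add: lac_def)

lemma err_prod:
  assumes e: "e \<subseteq> {0..<6}" "1 \<le> card e" "card e \<le> 2" and P: "P \<in> {PX, PY, PZ}"
  shows "\<exists>Ea\<in>errors 6. \<exists>Eb\<in>errors 6. snd (pmult 6 (padj Ea) Eb) = (\<lambda>j. if j \<in> e then P else PI)"
proof -
  have fin: "finite e" using e finite_subset by auto
  have "card e = 1 \<or> card e = 2" using e by auto
  then show ?thesis
  proof
    assume "card e = 1"
    then obtain i where i: "e = {i}" by (rule card_1_singletonE)
    have "i < 6" using e i by auto
    then have "single i P \<in> errors 6" using P unfolding errors_def by blast
    moreover have "pid \<in> errors 6" unfolding errors_def by blast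
    moreover have "snd (pmult 6 (padj pid) (single i P)) = (\<lambda>j. if j \<in> e then P else PI)"
      using i by (auto simp: pmult_def padj_def pid_def single_def)
    ultimately show ?thesis by blast
  next
    assume "card e = 2"
    then obtain i k where ik: "e = {i, k}" "i \<noteq> k" by (meson card_2_iff)
    have "i < 6" "k < 6" using e ik by auto
    then have "single i P \<in> errors 6" "single k P \<in> errors 6" using P unfolding errors_def by blast+
    moreover have "snd (pmult 6 (padj (single i P)) (single k P)) = (\<lambda>j. if j \<in> e then P else PI)"
      using ik P by (auto simp: pmult_def padj_def single_def)
    ultimately show ?thesis by blast
  qed
qed

lemma HX:
  assumes H: "\<forall>Ea\<in>errors 6. \<forall>Eb\<in>errors 6.
        (\<exists>s\<in>S. anticommute 6 (pmult 6 (padj Ea) Eb) s) \<or>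
        (\<exists>s\<in>S. eq_phase (pmult 6 (padj Ea) Eb) s)"
  and e: "e \<subseteq> {0..<6}" "1 \<le> card e" "card e \<le> 2"
  and ev: "\<forall>s\<in>S. even (card (e \<inter> zset (snd s)))"
  shows "\<exists>s\<in>S. xset (snd s) = e"
proof -
  obtain Ea Eb where E: "Ea \<in> errors 6" "Eb \<in> errors 6" "snd (pmult 6 (padj Ea) Eb) = (\<lambda>j. if j \<in> e then PX else PI)"
    using err_prod[OF e, of PX] by auto
  define E where "E = pmult 6 (padj Ea) Eb"
  have sE: "snd E = (\<lambda>j. if j \<in> e then PX else PI)" using E E_def by simp
  from H E(1,2) have "(\<exists>s\<in>S. anticommute 6 E s) \<or> (\<exists>s\<in>S. eq_phase E s)" unfolding E_def by blast
  then show ?thesis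
  proof
    assume "\<exists>s\<in>S. anticommute 6 E s"
    then obtain s where s: "s \<in> S" "anticommute 6 E s" by blast
    have "{j. j < 6 \<and> lac (snd E j) (snd s j)} = e \<inter> zset (snd s)"
      using e(1) by (auto simp: sE lacX lacI zset_def)
    then have "odd (card (e \<inter> zset (snd s)))" using anti_odd[OF s(2)] by simp
    then show ?thesis using ev s by blast
  next
    assume "\<exists>s\<in>S. eq_phase E s"
    then obtain s where s: "s \<in> S" "snd E = snd s" unfolding eq_phase_def by blast
    have "xset (snd s) = e" using e(1) unfolding s(2)[symmetric] sE xset_def by auto
    then show ?thesis using s by blast
  qed
qed

lemma HZ:
  assumes H: "\<forall>Ea\<in>errors 6. \<forall>Eb\<in>errors 6.
        (\<exists>s\<in>S. anticommute 6 (pmult 6 (padj Ea) Eb) s) \<or>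
        (\<exists>s\<in>S. eq_phase (pmult 6 (padj Ea) Eb) s)"
  and e: "e \<subseteq> {0..<6}" "1 \<le> card e" "card e \<le> 2"
  and ev: "\<forall>s\<in>S. even (card (e \<inter> xset (snd s)))"
  shows "\<exists>s\<in>S. zset (snd s) = e"
proof -
  obtain Ea Eb where E: "Ea \<in> errors 6" "Eb \<in> errors 6" "snd (pmult 6 (padj Ea) Eb) = (\<lambda>j. if j \<in> e then PZ else PI)"
    using err_prod[OF e, of PZ] by auto
  define E where "E = pmult 6 (padj Ea) Eb"
  have sE: "snd E = (\<lambda>j. if j \<in> e then PZ else PI)" using E E_def by simp
  from H E(1,2) have "(\<exists>s\<in>S. anticommute 6 E s) \<or> (\<exists>s\<in>S. eq_phase E s)" unfolding E_def by blast
  then show ?thesis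
  proof
    assume "\<exists>s\<in>S. anticommute 6 E s"
    then obtain s where s: "s \<in> S" "anticommute 6 E s" by blast
    have "{j. j < 6 \<and> lac (snd E j) (snd s j)} = e \<inter> xset (snd s)"
      using e(1) by (auto simp: sE lacZ lacI xset_def)
    then have "odd (card (e \<inter> xset (snd s)))" using anti_odd[OF s(2)] by simp
    then show ?thesis using ev s by blast
  next
    assume "\<exists>s\<in>S. eq_phase E s"
    then obtain s where s: "s \<in> S" "snd E = snd s" unfolding eq_phase_def by blast
    have "zset (snd s) = e" using e(1) unfolding s(2)[symmetric] sE zset_def by auto
    then show ?thesis using s by blast
  qed
qed



lemma SumI_sub: "SumI f A \<subseteq> \<Union> (f ` A)"
proof
  fix x assume "x \<in> SumI f A"
  then have "{i\<in>A. x \<in> f i} \<noteq> {}" unfolding SumI_def by (metis (no_types, lifting) card.empty even_zero mem_Collect_eq)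
  then obtain i where "i \<in> A" "x \<in> f i" by blast
  then show "x \<in> \<Union> (f ` A)" by blast
qed

lemma SumI_single[simp]: "SumI f {i} = f i"
  using SumI_insert[of "{}" i f] by simp

lemma SumI_restrict:
  assumes "\<forall>i\<in>A - B. f i = {}"
  shows "SumI f A = SumI f (A \<inter> B)"
proof -
  have "\<And>x. {i\<in>A. x \<in> f i} = {i\<in>A \<inter> B. x \<in> f i}" using assms by auto
  then show ?thesis unfolding SumI_def by simp
qed

lemma gen_rep:
  assumes "s \<in> gen_group n (g ` I)" "finite I"
  shows "\<exists>A\<subseteq>I. xset (snd s) = SumI (\<lambda>i. xset (snd (g i))) A \<and> zset (snd s) = SumI (\<lambda>i. zset (snd (g i))) A"
  using assms(1)
proof (induction rule: gen_group.induct)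
  case gen_id
  then show ?case by (intro exI[of _ "{}"]) (simp add: pid_def xset_def zset_def)
next
  case (gen_step g' s)
  obtain i where i: "i \<in> I" "g' = g i" using gen_step by auto
  obtain A where A: "A \<subseteq> I" "xset (snd s) = SumI (\<lambda>i. xset (snd (g i))) A" "zset (snd s) = SumI (\<lambda>i. zset (snd (g i))) A"
    using gen_step by auto
  have fA: "finite A" by (rule finite_subset[OF A(1) assms(2)])
  have "xset (snd (pmult n g' s)) = SumI (\<lambda>i. xset (snd (g i))) (sym_diff {i} A)"
    using SumI_sd[of "{i}" A "\<lambda>i. xset (snd (g i))"] fA A i by (simp add: xset_mult)
  moreover have "zset (snd (pmult n g' s)) = SumI (\<lambda>i. zset (snd (g i))) (sym_diff {i} A)"
    using SumI_sd[of "{i}" A "\<lambda>i. zset (snd (g i))"] fA A i by (simp add: zset_mult)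
  moreover have "sym_diff {i} A \<subseteq> I" using i A by auto
  ultimately show ?case by blast
qed

lemma half:
  fixes P :: "(nat set \<times> nat set) set" and XI ZI :: "nat set" and xs zs :: "nat \<Rightarrow> nat set"
  assumes fin: "finite XI" "finite ZI" and cXZ: "card XI + card ZI = 5" and cX: "card XI \<le> 2"
  and xsI: "\<forall>i. xs i \<subseteq> {0..<6}" and zsI: "\<forall>i. zs i \<subseteq> {0..<6}"
  and rep: "\<forall>p\<in>P. fst p \<in> SumI xs ` Pow XI \<and> snd p \<in> SumI zs ` Pow ZI"
  and HX: "\<forall>e. e \<subseteq> {0..<6} \<longrightarrow> 1 \<le> card e \<longrightarrow> card e \<le> 2 \<longrightarrow> (\<forall>p\<in>P. even (card (e \<inter> snd p))) \<longrightarrow> (\<exists>p\<in>P. fst p = e)"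
  and HZ: "\<forall>e. e \<subseteq> {0..<6} \<longrightarrow> 1 \<le> card e \<longrightarrow> card e \<le> 2 \<longrightarrow> (\<forall>p\<in>P. even (card (e \<inter> fst p))) \<longrightarrow> (\<exists>p\<in>P. snd p = e)"
  shows False
proof -
  define V where "V = SumI zs ` Pow ZI"
  define U where "U = SumI xs ` Pow XI"
  have VI: "V \<subseteq> Pow {0..<6}"
  proof
    fix v assume "v \<in> V"
    then obtain A where "v = SumI zs A" unfolding V_def by blast
    then show "v \<in> Pow {0..<6}" using SumI_sub[of zs A] zsI by blast
  qed
  have V0: "{} \<in> V" unfolding V_def using SumI_empty by blast
  have Vc: "\<forall>a\<in>V. \<forall>b\<in>V. sym_diff a b \<in> V"
  proof (intro ballI)
    fix a b assume "a \<in> V" "b \<in> V"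
    then obtain A B where AB: "A \<subseteq> ZI" "B \<subseteq> ZI" "a = SumI zs A" "b = SumI zs B" unfolding V_def by blast
    then have "finite A" "finite B" using fin finite_subset by auto
    then have "sym_diff a b = SumI zs (sym_diff A B)" using AB SumI_sd by blast
    moreover have "sym_diff A B \<subseteq> ZI" using AB by blast
    ultimately show "sym_diff a b \<in> V" unfolding V_def by blast
  qed
  have cardV: "card V \<le> 2 ^ card ZI"
    unfolding V_def using card_image_le[of "Pow ZI" "SumI zs"] fin by (simp add: card_Pow)
  obtain x1 x2 where x12: "x1 \<subseteq> {0..<6}" "x2 \<subseteq> {0..<6}" "U \<subseteq> {{}, x1, x2, sym_diff x1 x2}"
      "card XI \<le> 1 \<longrightarrow> x2 = {}" "card XI = 0 \<longrightarrow> x1 = {}"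
  proof -
    have "card XI = 0 \<or> card XI = 1 \<or> card XI = 2" using cX by auto
    then show ?thesis
    proof (elim disjE)
      assume c: "card XI = 0"
      then have "XI = {}" using fin by simp
      then have "U = {{}}" unfolding U_def by simp
      then show ?thesis using that[of "{}" "{}"] c by simp
    next
      assume c: "card XI = 1"
      then obtain a where a: "XI = {a}" by (rule card_1_singletonE)
      have "Pow XI = {{}, {a}}" using a by auto
      then have "U = {{}, xs a}" unfolding U_def by simp
      then show ?thesis using that[of "xs a" "{}"] c xsI by auto
    next
      assume c: "card XI = 2"
      then obtain a b where ab: "XI = {a, b}" "a \<noteq> b" by (meson card_2_iff)
      have "Pow XI = {{}, {a}, {b}, {a, b}}" using ab by (auto simp: Pow_insert)
      moreover have "SumI xs {a, b} = sym_diff (xs a) (xs b)" using SumI_insert[of "{b}" a xs] ab by simp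
      ultimately have "U = {{}, xs a, xs b, sym_diff (xs a) (xs b)}" unfolding U_def by auto
      then show ?thesis using that[of "xs a" "xs b"] c xsI by auto
    qed
  qed
  have fx: "finite x1" "finite x2" using finite_subset[OF x12(1)] finite_subset[OF x12(2)] by auto
  have DZ: "\<forall>e. e \<subseteq> {0..<6} \<longrightarrow> 1 \<le> card e \<longrightarrow> card e \<le> 2 \<longrightarrow> even (card (e \<inter> x1)) \<longrightarrow> even (card (e \<inter> x2)) \<longrightarrow> e \<in> V"
  proof (intro allI impI)
    fix e assume e: "e \<subseteq> {0..<6}" "1 \<le> card e" "card e \<le> 2" "even (card (e \<inter> x1))" "even (card (e \<inter> x2))"
    have ev3: "even (card (e \<inter> sym_diff x1 x2))"
      using even_sd[OF fx, of e] e(4,5) by (simp add: Int_commute)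
    have "\<forall>p\<in>P. even (card (e \<inter> fst p))"
    proof
      fix p assume "p \<in> P"
      then have "fst p \<in> U" using rep U_def by blast
      then have "fst p \<in> {{}, x1, x2, sym_diff x1 x2}" using x12 by blast
      then show "even (card (e \<inter> fst p))" using e ev3 by auto
    qed
    then obtain p where "p \<in> P" "snd p = e" using HZ e by blast
    then show "e \<in> V" using rep V_def by blast
  qed
  have DX: "\<forall>e. e \<subseteq> {0..<6} \<longrightarrow> 1 \<le> card e \<longrightarrow> card e \<le> 2 \<longrightarrow> (\<forall>v\<in>V. even (card (e \<inter> v))) \<longrightarrow> e \<in> {{}, x1, x2, sym_diff x1 x2}"
  proof (intro allI impI)
    fix e assume e: "e \<subseteq> {0..<6}" "1 \<le> card e" "card e \<le> 2" "\<forall>v\<in>V. even (card (e \<inter> v))"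
    have "\<forall>p\<in>P. even (card (e \<inter> snd p))" using e(4) rep V_def by blast
    then obtain p where "p \<in> P" "fst p = e" using HX e by blast
    then have "e \<in> U" using rep U_def by blast
    then show "e \<in> {{}, x1, x2, sym_diff x1 x2}" using x12 by blast
  qed
  have bounds: "16 \<le> card V \<and> (x2 = {} \<longrightarrow> 32 \<le> card V) \<and> (x1 = {} \<longrightarrow> x2 = {} \<longrightarrow> 64 \<le> card V)"
    by (rule core[OF VI V0 Vc x12(1,2) DZ DX])
  have "card XI = 0 \<or> card XI = 1 \<or> card XI = 2" using cX by auto
  then show False
  proof (elim disjE)
    assume c: "card XI = 0"
    then have "card ZI = 5" using cXZ by simp
    then show False using cardV bounds x12(4,5) c by simp
  next
    assume c: "card XI = 1"
    then have "card ZI = 4" using cXZ by simp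
    then show False using cardV bounds x12(4,5) c by simp
  next
    assume c: "card XI = 2"
    then have "card ZI = 3" using cXZ by simp
    then show False using cardV bounds by simp
  qed
qed



theorem proposition1:
  shows "\<not> (\<exists>g :: nat \<Rightarrow> pauli.
     (\<forall>i<5. g i \<in> pauli_group 6) \<and>
     independent_gens 6 g {0..<5} \<and>
     (\<forall>i<5. \<forall>j<5. commute 6 (g i) (g j)) \<and>
     (\<forall>i<5. css_type 6 (g i)) \<and>
     (\<forall>Ea\<in>errors 6. \<forall>Eb\<in>errors 6.
        (\<exists>s\<in>gen_group 6 (g ` {0..<5}). anticommute 6 (pmult 6 (padj Ea) Eb) s) \<or>
        (\<exists>s\<in>gen_group 6 (g ` {0..<5}). eq_phase (pmult 6 (padj Ea) Eb) s)))"
proof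
  assume "\<exists>g :: nat \<Rightarrow> pauli.
     (\<forall>i<5. g i \<in> pauli_group 6) \<and>
     independent_gens 6 g {0..<5} \<and>
     (\<forall>i<5. \<forall>j<5. commute 6 (g i) (g j)) \<and>
     (\<forall>i<5. css_type 6 (g i)) \<and>
     (\<forall>Ea\<in>errors 6. \<forall>Eb\<in>errors 6.
        (\<exists>s\<in>gen_group 6 (g ` {0..<5}). anticommute 6 (pmult 6 (padj Ea) Eb) s) \<or>
        (\<exists>s\<in>gen_group 6 (g ` {0..<5}). eq_phase (pmult 6 (padj Ea) Eb) s))"
  then obtain g :: "nat \<Rightarrow> pauli" where css: "\<forall>i<5. css_type 6 (g i)"
    and H: "\<forall>Ea\<in>errors 6. \<forall>Eb\<in>errors 6.
        (\<exists>s\<in>gen_group 6 (g ` {0..<5}). anticommute 6 (pmult 6 (padj Ea) Eb) s) \<or>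
        (\<exists>s\<in>gen_group 6 (g ` {0..<5}). eq_phase (pmult 6 (padj Ea) Eb) s)"
    by blast
  define S where "S = gen_group 6 (g ` {0..<5})"
  define XI where "XI = {i\<in>{0..<5::nat}. \<forall>j<6. snd (g i) j \<in> {PI, PX}}"
  define ZI where "ZI = {0..<5::nat} - XI"
  define xs where "xs i = xset (snd (g i))" for i
  define zs where "zs i = zset (snd (g i))" for i
  have HS: "\<forall>Ea\<in>errors 6. \<forall>Eb\<in>errors 6.
        (\<exists>s\<in>S. anticommute 6 (pmult 6 (padj Ea) Eb) s) \<or>
        (\<exists>s\<in>S. eq_phase (pmult 6 (padj Ea) Eb) s)" using H S_def by simp
  have zsX: "zs i = {}" if "i \<in> XI" for i
    using that unfolding XI_def zs_def zset_def by auto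
  have xsZ: "xs i = {}" if "i \<in> ZI" for i
  proof -
    have i5: "i < 5" and nX: "\<not> (\<forall>j<6. snd (g i) j \<in> {PI, PX})" using that unfolding ZI_def XI_def by auto
    then have "\<forall>j<6. snd (g i) j \<in> {PI, PZ}" using css unfolding css_type_def by blast
    then show ?thesis unfolding xs_def xset_def by auto
  qed
  have finXI: "finite XI" and finZI: "finite ZI" unfolding XI_def ZI_def by auto
  have XI5: "XI \<subseteq> {0..<5}" unfolding XI_def by auto
  have cZI: "card ZI = 5 - card XI" unfolding ZI_def using XI5 by (simp add: card_Diff_subset finite_subset)
  have cXI: "card XI \<le> 5" using card_mono[OF _ XI5] by simp
  have cXZ: "card XI + card ZI = 5" using cZI cXI by simp
  define P where "P = (\<lambda>s. (xset (snd s), zset (snd s))) ` S"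
  have rep: "\<forall>p\<in>P. fst p \<in> SumI xs ` Pow XI \<and> snd p \<in> SumI zs ` Pow ZI"
  proof
    fix p assume "p \<in> P"
    then obtain s where s: "s \<in> S" "p = (xset (snd s), zset (snd s))" unfolding P_def by blast
    obtain A where A: "A \<subseteq> {0..<5}" "xset (snd s) = SumI xs A" "zset (snd s) = SumI zs A"
      using gen_rep[of s 6 g "{0..<5}"] s(1) unfolding S_def xs_def zs_def by auto
    have "SumI xs A = SumI xs (A \<inter> XI)"
      by (rule SumI_restrict) (use A(1) xsZ ZI_def in auto)
    moreover have "SumI zs A = SumI zs (A \<inter> ZI)"
      by (rule SumI_restrict) (use A(1) zsX ZI_def in auto)
    ultimately show "fst p \<in> SumI xs ` Pow XI \<and> snd p \<in> SumI zs ` Pow ZI"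
      using s A by auto
  qed
  have xsI: "\<forall>i. xs i \<subseteq> {0..<6}" unfolding xs_def xset_def by auto
  have zsI: "\<forall>i. zs i \<subseteq> {0..<6}" unfolding zs_def zset_def by auto
  have PX: "\<forall>e. e \<subseteq> {0..<6} \<longrightarrow> 1 \<le> card e \<longrightarrow> card e \<le> 2 \<longrightarrow> (\<forall>p\<in>P. even (card (e \<inter> snd p))) \<longrightarrow> (\<exists>p\<in>P. fst p = e)"
  proof (intro allI impI)
    fix e assume e: "e \<subseteq> {0..<6}" "1 \<le> card e" "card e \<le> 2" "\<forall>p\<in>P. even (card (e \<inter> snd p))"
    have "\<forall>s\<in>S. even (card (e \<inter> zset (snd s)))" using e(4) unfolding P_def by auto
    then obtain s where "s \<in> S" "xset (snd s) = e" using HX[OF HS e(1-3)] by blast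
    then show "\<exists>p\<in>P. fst p = e" unfolding P_def by force
  qed
  have PZ: "\<forall>e. e \<subseteq> {0..<6} \<longrightarrow> 1 \<le> card e \<longrightarrow> card e \<le> 2 \<longrightarrow> (\<forall>p\<in>P. even (card (e \<inter> fst p))) \<longrightarrow> (\<exists>p\<in>P. snd p = e)"
  proof (intro allI impI)
    fix e assume e: "e \<subseteq> {0..<6}" "1 \<le> card e" "card e \<le> 2" "\<forall>p\<in>P. even (card (e \<inter> fst p))"
    have "\<forall>s\<in>S. even (card (e \<inter> xset (snd s)))" using e(4) unfolding P_def by auto
    then obtain s where "s \<in> S" "zset (snd s) = e" using HZ[OF HS e(1-3)] by blast
    then show "\<exists>p\<in>P. snd p = e" unfolding P_def by force
  qed
  show False
  proof (cases "card XI \<le> 2")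
    case True
    show False by (rule half[OF finXI finZI cXZ True xsI zsI rep PX PZ])
  next
    case False
    then have cZ: "card ZI \<le> 2" using cXZ by simp
    have cZX: "card ZI + card XI = 5" using cXZ by simp
    have rep': "\<forall>p\<in>prod.swap ` P. fst p \<in> SumI zs ` Pow ZI \<and> snd p \<in> SumI xs ` Pow XI"
      using rep by auto
    have PX': "\<forall>e. e \<subseteq> {0..<6} \<longrightarrow> 1 \<le> card e \<longrightarrow> card e \<le> 2 \<longrightarrow> (\<forall>p\<in>prod.swap ` P. even (card (e \<inter> snd p))) \<longrightarrow> (\<exists>p\<in>prod.swap ` P. fst p = e)"
    proof (intro allI impI)
      fix e assume e: "e \<subseteq> {0..<6}" "1 \<le> card e" "card e \<le> 2" "\<forall>p\<in>prod.swap ` P. even (card (e \<inter> snd p))"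
      then have "\<forall>p\<in>P. even (card (e \<inter> fst p))" by auto
      then obtain p where "p \<in> P" "snd p = e" using PZ e by blast
      then show "\<exists>p\<in>prod.swap ` P. fst p = e" by force
    qed
    have PZ': "\<forall>e. e \<subseteq> {0..<6} \<longrightarrow> 1 \<le> card e \<longrightarrow> card e \<le> 2 \<longrightarrow> (\<forall>p\<in>prod.swap ` P. even (card (e \<inter> fst p))) \<longrightarrow> (\<exists>p\<in>prod.swap ` P. snd p = e)"
    proof (intro allI impI)
      fix e assume e: "e \<subseteq> {0..<6}" "1 \<le> card e" "card e \<le> 2" "\<forall>p\<in>prod.swap ` P. even (card (e \<inter> fst p))"
      then have "\<forall>p\<in>P. even (card (e \<inter> snd p))" by auto
      then obtain p where "p \<in> P" "fst p = e" using PX e by blast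
      then show "\<exists>p\<in>prod.swap ` P. snd p = e" by force
    qed
    show False by (rule half[OF finZI finXI cZX cZ zsI xsI rep' PX' PZ'])
  qed
qed

end
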